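(* Let $1<w\le 2$, $h>1$, $k\ge 2$, and let $\frac12\le y_1<\dots<y_n\le h-\frac12$ be uniformly spaced with $y_{i+1}-y_i=\frac1k$ for all $i$. Let $(\mathbf x,\prec)$ be a $\frac1k$-reasonable layout of this instance. If $1<i<n$ and both $s_{i-1}$ and $s_{i+1}$ are in front of $s_i$, then $s_i$ is a standard bad square.
   Context: The instance is the strip $T=[0,w]\times[0,h]$ with the given $y_i$. A layout is a pair $(\mathbf x,\prec)$ where $\mathbf x=(x_1,\dots,x_n)$ with $x_i\in[\frac12,w-\frac12]$, and $\prec$ is a total order on the squares $s_1,\dots,s_n$, where $s_i$ is the closed axis-parallel unit square with centre $(x_i,y_i)$. If $s_i\prec s_j$ we say $s_j$ is in front of $s_i$ and $s_i$ is behind $s_j$. A point $p$ on the boundary of $s_i$ is visible if every square $s_j$ ($j\neq i$) containing $p$ is behind $s_i$, and covered otherwise. The visible perimeter of $s_i$ is the total length of its visible boundary points; the gap of $s_i$ is its visible perimeter minus $2$, the gap of a layout is the minimum gap of its squares, and a layout is $\varepsilon$-reasonable if its gap is larger than $\varepsilon$. A bad square is a square with at least two of its four corners covered; a standard bad square is a bad square one of whose vertical sides is entirely covered. *)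

theory Defs
  imports "HOL-Analysis.Analysis"
begin

text \<open>Squares are indexed by 1..n; centre of square i is (x i, y i).
  The total order on squares is a strict relation prec on {1..n}:
  prec i j means s_i is behind s_j (s_j in front of s_i).\<close>

definition sq :: "real \<Rightarrow> real \<Rightarrow> (real \<times> real) set" where
  "sq a b = {a - 1/2 .. a + 1/2} \<times> {b - 1/2 .. b + 1/2}"

definition strict_total_on :: "nat set \<Rightarrow> (nat \<Rightarrow> nat \<Rightarrow> bool) \<Rightarrow> bool" where
  "strict_total_on S r \<longleftrightarrow>
     (\<forall>i\<in>S. \<not> r i i) \<and>
     (\<forall>i\<in>S. \<forall>j\<in>S. \<forall>l\<in>S. r i j \<longrightarrow> r j l \<longrightarrow> r i l) \<and>
     (\<forall>i\<in>S. \<forall>j\<in>S. i \<noteq> j \<longrightarrow> r i j \<or> r j i)"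

definition is_layout :: "real \<Rightarrow> nat \<Rightarrow> (nat \<Rightarrow> real) \<Rightarrow> (nat \<Rightarrow> nat \<Rightarrow> bool) \<Rightarrow> bool" where
  "is_layout w n x prec \<longleftrightarrow>
     (\<forall>i\<in>{1..n}. 1/2 \<le> x i \<and> x i \<le> w - 1/2) \<and> strict_total_on {1..n} prec"

definition covered :: "nat \<Rightarrow> (nat \<Rightarrow> real) \<Rightarrow> (nat \<Rightarrow> real) \<Rightarrow> (nat \<Rightarrow> nat \<Rightarrow> bool)
                        \<Rightarrow> nat \<Rightarrow> real \<times> real \<Rightarrow> bool" where
  "covered n x y prec i p \<longleftrightarrow>
     (\<exists>j\<in>{1..n}. j \<noteq> i \<and> p \<in> sq (x j) (y j) \<and> \<not> prec j i)"

text \<open>Visible perimeter: total length of visible boundary points, computed side by side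
  (the four sides meet only in the corners, a null set).\<close>
definition vis_perim :: "nat \<Rightarrow> (nat \<Rightarrow> real) \<Rightarrow> (nat \<Rightarrow> real) \<Rightarrow> (nat \<Rightarrow> nat \<Rightarrow> bool)
                          \<Rightarrow> nat \<Rightarrow> real" where
  "vis_perim n x y prec i =
      measure lborel {t \<in> {-1/2..1/2}. \<not> covered n x y prec i (x i + t, y i - 1/2)}
    + measure lborel {t \<in> {-1/2..1/2}. \<not> covered n x y prec i (x i + t, y i + 1/2)}
    + measure lborel {t \<in> {-1/2..1/2}. \<not> covered n x y prec i (x i - 1/2, y i + t)}
    + measure lborel {t \<in> {-1/2..1/2}. \<not> covered n x y prec i (x i + 1/2, y i + t)}"

definition sq_gap :: "nat \<Rightarrow> (nat \<Rightarrow> real) \<Rightarrow> (nat \<Rightarrow> real) \<Rightarrow> (nat \<Rightarrow> nat \<Rightarrow> bool)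
                       \<Rightarrow> nat \<Rightarrow> real" where
  "sq_gap n x y prec i = vis_perim n x y prec i - 2"

definition layout_gap :: "nat \<Rightarrow> (nat \<Rightarrow> real) \<Rightarrow> (nat \<Rightarrow> real) \<Rightarrow> (nat \<Rightarrow> nat \<Rightarrow> bool) \<Rightarrow> real" where
  "layout_gap n x y prec = Min ((\<lambda>i. sq_gap n x y prec i) ` {1..n})"

definition reasonable :: "real \<Rightarrow> nat \<Rightarrow> (nat \<Rightarrow> real) \<Rightarrow> (nat \<Rightarrow> real) \<Rightarrow> (nat \<Rightarrow> nat \<Rightarrow> bool) \<Rightarrow> bool" where
  "reasonable eps n x y prec \<longleftrightarrow> layout_gap n x y prec > eps"

definition corners :: "real \<Rightarrow> real \<Rightarrow> (real \<times> real) set" where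
  "corners a b = {(a - 1/2, b - 1/2), (a - 1/2, b + 1/2), (a + 1/2, b - 1/2), (a + 1/2, b + 1/2)}"

definition bad_square :: "nat \<Rightarrow> (nat \<Rightarrow> real) \<Rightarrow> (nat \<Rightarrow> real) \<Rightarrow> (nat \<Rightarrow> nat \<Rightarrow> bool) \<Rightarrow> nat \<Rightarrow> bool" where
  "bad_square n x y prec i \<longleftrightarrow>
     card {c \<in> corners (x i) (y i). covered n x y prec i c} \<ge> 2"

definition standard_bad_square :: "nat \<Rightarrow> (nat \<Rightarrow> real) \<Rightarrow> (nat \<Rightarrow> real) \<Rightarrow> (nat \<Rightarrow> nat \<Rightarrow> bool) \<Rightarrow> nat \<Rightarrow> bool" where
  "standard_bad_square n x y prec i \<longleftrightarrow>
     bad_square n x y prec i \<and>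
     ((\<forall>t\<in>{y i - 1/2 .. y i + 1/2}. covered n x y prec i (x i - 1/2, t)) \<or>
      (\<forall>t\<in>{y i - 1/2 .. y i + 1/2}. covered n x y prec i (x i + 1/2, t)))"

end

theory Submission imports Defs begin

lemma meas_le: assumes "A \<subseteq> {a..b}" "a \<le> b" shows "measure lborel A \<le> b - a"
proof -
  have "emeasure lborel A \<le> emeasure lborel {a..b}" using assms by (intro emeasure_mono) auto
  then have "enn2real (emeasure lborel A) \<le> enn2real (emeasure lborel {a..b})"
    using assms by (intro enn2real_mono) auto
  then show ?thesis using assms by (simp add: measure_def)
qed

lemma horiz: assumes "\<bar>d\<bar> \<le> 1" "S \<subseteq> {t\<in>{-1/2..1/2}. \<not> \<bar>t + d\<bar> \<le> 1/2}"
  shows "measure lborel S \<le> \<bar>d\<bar>"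
proof (cases "d \<ge> 0")
  case True
  have "S \<subseteq> {1/2-d..1/2}" using \<open>0 \<le> d\<close> by (intro subset_trans[OF assms(2)]) (auto simp: abs_if)
  from meas_le[OF this] True assms show ?thesis by auto
next
  case False
  have "S \<subseteq> {-1/2..-1/2-d}" using \<open>\<not> 0 \<le> d\<close> by (intro subset_trans[OF assms(2)]) (auto simp: abs_if)
  from meas_le[OF this] False assms show ?thesis by auto
qed

lemma vert1: assumes "e \<ge> 0" "e \<le> 1" "S \<subseteq> {t\<in>{-1/2..1/2::real}. \<not> t \<le> 1/2 - e}"
  shows "measure lborel S \<le> e"
proof -
  have "S \<subseteq> {1/2-e..1/2}" by (rule subset_trans[OF assms(3)]) auto
  from meas_le[OF this] assms show ?thesis by auto
qed

lemma vert2: assumes "e \<ge> 0" "e \<le> 1" "S \<subseteq> {t\<in>{-1/2..1/2::real}. \<not> e - 1/2 \<le> t}"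
  shows "measure lborel S \<le> e"
proof -
  have "S \<subseteq> {-1/2..e-1/2}" by (rule subset_trans[OF assms(3)]) auto
  from meas_le[OF this] assms show ?thesis by auto
qed

theorem lemma11:
  fixes w h :: real and k n i :: nat and y x :: "nat \<Rightarrow> real" and prec :: "nat \<Rightarrow> nat \<Rightarrow> bool"
  assumes "1 < w" "w \<le> 2" "h > 1" "k \<ge> 2"
    and "1/2 \<le> y 1" "y n \<le> h - 1/2"
    and "\<forall>j. 1 \<le> j \<and> j < n \<longrightarrow> y (j + 1) - y j = 1 / real k"
    and "is_layout w n x prec"
    and "reasonable (1 / real k) n x y prec"
    and "1 < i" "i < n"
    and "prec i (i - 1)" "prec i (i + 1)"
  shows "standard_bad_square n x y prec i"
proof -
  define e where "e = 1 / real k"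
  define a where "a = x (i - 1)"
  define b where "b = x i"
  define c where "c = x (i + 1)"
  define yi where "yi = y i"
  have e0: "0 < e" and e1: "e \<le> 1/2" using assms(4) by (auto simp: e_def field_simps)
  have ya: "y (i - 1) = yi - e"
  proof -
    have "1 \<le> i - 1 \<and> i - 1 < n" using assms(10,11) by auto
    then have "y (i - 1 + 1) - y (i - 1) = e" using assms(7) by (auto simp: e_def)
    moreover have "i - 1 + 1 = i" using assms(10) by auto
    ultimately show ?thesis by (simp add: yi_def)
  qed
  have yc: "y (i + 1) = yi + e" using assms(7)[rule_format, of i] assms(10,11)
    by (auto simp: e_def yi_def)
  have I: "i \<in> {1..n}" "i - 1 \<in> {1..n}" "i + 1 \<in> {1..n}" using assms(10,11) by auto
  have lay: "\<forall>j\<in>{1..n}. 1/2 \<le> x j \<and> x j \<le> w - 1/2" and st: "strict_total_on {1..n} prec"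
    using assms(8) by (auto simp: is_layout_def)
  have xa: "1/2 \<le> a" "a \<le> w - 1/2" using lay I by (auto simp: a_def)
  have xb: "1/2 \<le> b" "b \<le> w - 1/2" using lay I by (auto simp: b_def)
  have xc: "1/2 \<le> c" "c \<le> w - 1/2" using lay I by (auto simp: c_def)
  have na: "\<not> prec (i - 1) i"
  proof
    assume "prec (i - 1) i"
    with st assms(12) I show False unfolding strict_total_on_def by blast
  qed
  have nc: "\<not> prec (i + 1) i"
  proof
    assume "prec (i + 1) i"
    with st assms(13) I show False unfolding strict_total_on_def by blast
  qed
  have cova: "covered n x y prec i p" if "p \<in> sq a (yi - e)" for p
    unfolding covered_def using that I na ya assms(10) by (intro bexI[of _ "i - 1"]) (auto simp: a_def)
  have covc: "covered n x y prec i p" if "p \<in> sq c (yi + e)" for p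
    unfolding covered_def using that I nc yc by (intro bexI[of _ "i + 1"]) (auto simp: c_def)
  have gap: "sq_gap n x y prec i > e"
  proof -
    have "layout_gap n x y prec \<le> sq_gap n x y prec i"
      unfolding layout_gap_def using I by (intro Min_le) auto
    then show ?thesis using assms(9) by (simp add: reasonable_def e_def)
  qed
  let ?B = "{t \<in> {-1/2..1/2}. \<not> covered n x y prec i (b + t, yi - 1/2)}"
  let ?T = "{t \<in> {-1/2..1/2}. \<not> covered n x y prec i (b + t, yi + 1/2)}"
  let ?L = "{t \<in> {-1/2..1/2}. \<not> covered n x y prec i (b - 1/2, yi + t)}"
  let ?R = "{t \<in> {-1/2..1/2}. \<not> covered n x y prec i (b + 1/2, yi + t)}"
  have vp: "measure lborel ?B + measure lborel ?T + measure lborel ?L + measure lborel ?R > 2 + e"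
    using gap by (simp add: sq_gap_def vis_perim_def b_def yi_def)
  have mB: "measure lborel ?B \<le> \<bar>b - a\<bar>"
  proof (rule horiz)
    show "\<bar>b - a\<bar> \<le> 1" using xa xb assms(2) by auto
    show "?B \<subseteq> {t \<in> {-1/2..1/2}. \<not> \<bar>t + (b - a)\<bar> \<le> 1/2}"
    proof (intro subsetI)
      fix t assume "t \<in> ?B"
      with cova[of "(b + t, yi - 1/2)"] e0 e1 show "t \<in> {t \<in> {-1/2..1/2}. \<not> \<bar>t + (b - a)\<bar> \<le> 1/2}"
        by (auto simp: sq_def abs_if split: if_splits)
    qed
  qed
  have mT: "measure lborel ?T \<le> \<bar>b - c\<bar>"
  proof (rule horiz)
    show "\<bar>b - c\<bar> \<le> 1" using xc xb assms(2) by auto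
    show "?T \<subseteq> {t \<in> {-1/2..1/2}. \<not> \<bar>t + (b - c)\<bar> \<le> 1/2}"
    proof (intro subsetI)
      fix t assume "t \<in> ?T"
      with covc[of "(b + t, yi + 1/2)"] e0 e1 show "t \<in> {t \<in> {-1/2..1/2}. \<not> \<bar>t + (b - c)\<bar> \<le> 1/2}"
        by (auto simp: sq_def abs_if split: if_splits)
    qed
  qed
  have cornA: "covered n x y prec i (b - 1/2, yi - 1/2)" if "a \<le> b"
    using that xa xb assms(2) e0 e1 by (intro cova) (auto simp: sq_def)
  have cornC: "covered n x y prec i (b - 1/2, yi + 1/2)" if "c \<le> b"
    using that xc xb assms(2) e0 e1 by (intro covc) (auto simp: sq_def)
  have cornA': "covered n x y prec i (b + 1/2, yi - 1/2)" if "b \<le> a"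
    using that xa xb assms(2) e0 e1 by (intro cova) (auto simp: sq_def)
  have cornC': "covered n x y prec i (b + 1/2, yi + 1/2)" if "b \<le> c"
    using that xc xb assms(2) e0 e1 by (intro covc) (auto simp: sq_def)
  have card2: "bad_square n x y prec i" if "p \<in> corners b yi" "q \<in> corners b yi" "p \<noteq> q"
    "covered n x y prec i p" "covered n x y prec i q" for p q
  proof -
    have "{p, q} \<subseteq> {c \<in> corners (x i) (y i). covered n x y prec i c}"
      using that by (auto simp: b_def yi_def)
    moreover have "finite {c \<in> corners (x i) (y i). covered n x y prec i c}"
      by (simp add: corners_def)
    ultimately have "card {p, q} \<le> card {c \<in> corners (x i) (y i). covered n x y prec i c}"
      by (rule card_mono[rotated])
    then show ?thesis using that(3) by (simp add: bad_square_def)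
  qed
  show ?thesis
  proof (cases "a \<le> b \<and> c \<le> b")
    case True
    have "bad_square n x y prec i"
      by (rule card2[OF _ _ _ cornA cornC]) (use True in \<open>auto simp: corners_def\<close>)
    moreover have "\<forall>t\<in>{y i - 1/2 .. y i + 1/2}. covered n x y prec i (x i - 1/2, t)"
    proof
      fix t assume t: "t \<in> {y i - 1/2 .. y i + 1/2}"
      show "covered n x y prec i (x i - 1/2, t)"
      proof (cases "t \<le> yi - e + 1/2")
        case True
        then show ?thesis using t \<open>a \<le> b \<and> c \<le> b\<close> xa xb assms(2) e0 e1
          by (intro cova) (auto simp: sq_def b_def yi_def)
      next
        case False
        then show ?thesis using t \<open>a \<le> b \<and> c \<le> b\<close> xc xb assms(2) e0 e1
          by (intro covc) (auto simp: sq_def b_def yi_def)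
      qed
    qed
    ultimately show ?thesis by (simp add: standard_bad_square_def)
  next
    case F1: False
    show ?thesis
    proof (cases "b \<le> a \<and> b \<le> c")
      case True
      have "bad_square n x y prec i"
        by (rule card2[OF _ _ _ cornA' cornC']) (use True in \<open>auto simp: corners_def\<close>)
      moreover have "\<forall>t\<in>{y i - 1/2 .. y i + 1/2}. covered n x y prec i (x i + 1/2, t)"
      proof
        fix t assume t: "t \<in> {y i - 1/2 .. y i + 1/2}"
        show "covered n x y prec i (x i + 1/2, t)"
        proof (cases "t \<le> yi - e + 1/2")
          case True
          then show ?thesis using t \<open>b \<le> a \<and> b \<le> c\<close> xa xb assms(2) e0 e1
            by (intro cova) (auto simp: sq_def b_def yi_def)
        next
          case False
          then show ?thesis using t \<open>b \<le> a \<and> b \<le> c\<close> xc xb assms(2) e0 e1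
            by (intro covc) (auto simp: sq_def b_def yi_def)
        qed
      qed
      ultimately show ?thesis by (simp add: standard_bad_square_def)
    next
      case F2: False
      have sum: "\<bar>b - a\<bar> + \<bar>b - c\<bar> \<le> 1" using F1 F2 xa xc assms(2) by auto
      have "measure lborel ?L \<le> e \<and> measure lborel ?R \<le> e"
      proof (cases "a < b")
        case True
        then have "b < c" using F1 by auto
        have "measure lborel ?L \<le> e"
          using True xa xb assms(2) e0 e1
          by (intro vert1) (auto intro!: cova simp: sq_def)
        moreover have "measure lborel ?R \<le> e"
          using \<open>b < c\<close> xc xb assms(2) e0 e1
          by (intro vert2) (auto intro!: covc simp: sq_def)
        ultimately show ?thesis by simp
      next
        case False
        then have "c < b" "b < a" using F1 F2 by auto
        have "measure lborel ?L \<le> e"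
          using \<open>c < b\<close> xc xb assms(2) e0 e1
          by (intro vert2) (auto intro!: covc simp: sq_def)
        moreover have "measure lborel ?R \<le> e"
          using \<open>b < a\<close> xa xb assms(2) e0 e1
          by (intro vert1) (auto intro!: cova simp: sq_def)
        ultimately show ?thesis by simp
      qed
      then have False using vp mB mT sum e1 by linarith
      then show ?thesis ..
    qed
  qed
qed

end
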